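(* Let $\Theta=\Theta_1\times\cdots\times\Theta_{N}\subseteq\mathbb{R}^{N}$, let $\theta$ be a random vector on $\Theta$ with independent components, $\theta_j$ having density $\pi_j$, with law $\mu(d\theta)=\prod_j\pi_j(\theta_j)\,d\theta_j$. Let $\mathscr{X}\subset\mathbb{R}^d$ ($d\in\{1,2,3\}$) be compact and $f:\mathscr{X}\times\Theta\to\mathbb{R}$ with $f\in L^2(\mathscr{X}\times\Theta)$, and assume $D(f;s)>0$ for almost every $s\in\mathscr{X}$. Let $U\subseteq\{1,\dots,N\}$, $U^c=\{1,\dots,N\}\setminus U$. For $\eta\in\Theta_{U^c}$ define the reduced model $f^{(\eta)}(s,\theta_U)=f(s,\theta_U,\eta)$ (i.e. $f(s,\theta)$ with the entries $\theta_{U^c}$ fixed at $\eta$), and the relative mean square error $$\mathcal{E}(f;\eta)=\frac{\int_{\mathscr{X}}\int_\Theta\big(f(s,\theta)-f^{(\eta)}(s,\theta_U)\big)^2\mu(d\theta)\,ds}{\int_{\mathscr{X}}\int_\Theta f(s,\theta)^2\,\mu(d\theta)\,ds}.$$ Then $\int_{\Theta_{U^c}}\mathcal{E}(f;\eta)\,\mu(d\eta)\le 2\,\mathfrak{S}^{\mathrm{tot}}_{U^c}(f;\mathscr{X})$.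
   Context: For $V\subseteq\{1,\dots,N\}$, $\Theta_V=\prod_{j\in V}\Theta_j$ carries the measure $\mu(d\theta_V)=\prod_{j\in V}\pi_j(\theta_j)d\theta_j$, and $\theta_V=(\theta_j)_{j\in V}$. For fixed $s$: $f_0(s)=\mathrm{E}[f(s,\cdot)]$, $f_1(s,\theta_U)=\mathrm{E}[f(s,\cdot)\mid\theta_U]-f_0(s)$, $f_2(s,\theta_{U^c})=\mathrm{E}[f(s,\cdot)\mid\theta_{U^c}]-f_0(s)$; $D(f;s)=\mathrm{Var}[f(s,\cdot)]$, $D_U(f;s)=\mathrm{E}[f_1^2]$, $D_{U^c}(f;s)=\mathrm{E}[f_2^2]$, $D_{U,U^c}(f;s)=D(f;s)-D_U(f;s)-D_{U^c}(f;s)$. For any index set $V$ with complement $V^c$, $D^{\mathrm{tot}}_V(f;s)=D(f;s)-D_{V^c}(f;s)$ (so $D^{\mathrm{tot}}_{U^c}=D_{U^c}+D_{U,U^c}$), and the functional total Sobol' index is $\mathfrak{S}^{\mathrm{tot}}_V(f;\mathscr{X})=\int_{\mathscr{X}}D^{\mathrm{tot}}_V(f;s)\,ds\big/\int_{\mathscr{X}}D(f;s)\,ds$. *)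

theory Defs
  imports "HOL-Probability.Probability"
begin

text \<open>Parameter vectors are functions nat => real, extensional on the index set
  (points of PiM I M). The law of theta_j is M j; the law of theta is PiM I M.\<close>

definition theta_measure :: "real set \<Rightarrow> (real \<Rightarrow> real) \<Rightarrow> real measure" where
  "theta_measure Th p = density lborel (\<lambda>x. ennreal (indicator Th x * p x))"

definition merge_pt :: "nat set \<Rightarrow> (nat \<Rightarrow> real) \<Rightarrow> (nat \<Rightarrow> real) \<Rightarrow> (nat \<Rightarrow> real)" where
  "merge_pt V th eta = (\<lambda>j. if j \<in> V then th j else eta j)"

definition sob_f0 :: "(nat \<Rightarrow> real measure) \<Rightarrow> nat set \<Rightarrow> ('a \<Rightarrow> (nat \<Rightarrow> real) \<Rightarrow> real) \<Rightarrow> 'a \<Rightarrow> real" where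
  "sob_f0 M I f s = (\<integral>th. f s th \<partial>PiM I M)"

definition sob_D :: "(nat \<Rightarrow> real measure) \<Rightarrow> nat set \<Rightarrow> ('a \<Rightarrow> (nat \<Rightarrow> real) \<Rightarrow> real) \<Rightarrow> 'a \<Rightarrow> real" where
  "sob_D M I f s = (\<integral>th. (f s th - sob_f0 M I f s)\<^sup>2 \<partial>PiM I M)"

text \<open>E[f(s,.) | theta_V = xi] (independent components): integrate out theta_{I-V}.\<close>
definition sob_condE :: "(nat \<Rightarrow> real measure) \<Rightarrow> nat set \<Rightarrow> nat set \<Rightarrow> ('a \<Rightarrow> (nat \<Rightarrow> real) \<Rightarrow> real)
    \<Rightarrow> 'a \<Rightarrow> (nat \<Rightarrow> real) \<Rightarrow> real" where
  "sob_condE M I V f s xi = (\<integral>zeta. f s (merge_pt V xi zeta) \<partial>PiM (I - V) M)"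

definition sob_DV :: "(nat \<Rightarrow> real measure) \<Rightarrow> nat set \<Rightarrow> nat set \<Rightarrow> ('a \<Rightarrow> (nat \<Rightarrow> real) \<Rightarrow> real) \<Rightarrow> 'a \<Rightarrow> real" where
  "sob_DV M I V f s = (\<integral>xi. (sob_condE M I V f s xi - sob_f0 M I f s)\<^sup>2 \<partial>PiM V M)"

definition sob_Dtot :: "(nat \<Rightarrow> real measure) \<Rightarrow> nat set \<Rightarrow> nat set \<Rightarrow> ('a \<Rightarrow> (nat \<Rightarrow> real) \<Rightarrow> real) \<Rightarrow> 'a \<Rightarrow> real" where
  "sob_Dtot M I V f s = sob_D M I f s - sob_DV M I (I - V) f s"

definition sobol_tot :: "(nat \<Rightarrow> real measure) \<Rightarrow> nat set \<Rightarrow> nat set \<Rightarrow> ('a::euclidean_space \<Rightarrow> (nat \<Rightarrow> real) \<Rightarrow> real)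
    \<Rightarrow> 'a set \<Rightarrow> real" where
  "sobol_tot M I V f X = (LINT s:X|lborel. sob_Dtot M I V f s) / (LINT s:X|lborel. sob_D M I f s)"

definition reduced_model :: "nat set \<Rightarrow> ('a \<Rightarrow> (nat \<Rightarrow> real) \<Rightarrow> real) \<Rightarrow> (nat \<Rightarrow> real) \<Rightarrow> 'a \<Rightarrow> (nat \<Rightarrow> real) \<Rightarrow> real" where
  "reduced_model U f eta s th = f s (merge_pt U th eta)"

definition rel_mse :: "(nat \<Rightarrow> real measure) \<Rightarrow> nat set \<Rightarrow> nat set \<Rightarrow> ('a::euclidean_space \<Rightarrow> (nat \<Rightarrow> real) \<Rightarrow> real)
    \<Rightarrow> 'a set \<Rightarrow> (nat \<Rightarrow> real) \<Rightarrow> real" where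
  "rel_mse M I U f X eta =
     (LINT s:X|lborel. (\<integral>th. (f s th - reduced_model U f eta s th)\<^sup>2 \<partial>PiM I M))
     / (LINT s:X|lborel. (\<integral>th. (f s th)\<^sup>2 \<partial>PiM I M))"

end

theory Submission
  imports Defs
begin


lemma sq_expand:
  fixes a :: "'b \<Rightarrow> real"
  assumes P: "prob_space Q" and am: "a \<in> borel_measurable Q" and a2: "integrable Q (\<lambda>x. (a x)^2)"
  shows "integrable Q a" "integrable Q (\<lambda>x. (a x - k)^2)"
    "(\<integral>x. (a x - k)^2 \<partial>Q) = (\<integral>x. (a x)^2 \<partial>Q) - 2*k*(\<integral>x. a x \<partial>Q) + k^2"
    "(\<integral>x. a x \<partial>Q)^2 \<le> (\<integral>x. (a x)^2 \<partial>Q)"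
proof -
  interpret prob_space Q by fact
  show ia: "integrable Q a" using square_integrable_imp_integrable[OF am a2] .
  have eq: "\<And>x k. (a x - k)^2 = (a x)^2 - 2*k*a x + k^2" by (simp add: power2_eq_square algebra_simps)
  have i3: "integrable Q (\<lambda>x. (a x)^2 - 2*k*a x + k^2)" for k
    using ia a2 by (intro Bochner_Integration.integrable_add Bochner_Integration.integrable_diff integrable_mult_right) auto
  show i2: "integrable Q (\<lambda>x. (a x - k)^2)" for k unfolding eq by (rule i3)
  have ic: "integrable Q (\<lambda>x. c)" for c :: real by auto
  have i4: "integrable Q (\<lambda>x. (a x)^2 - 2*k*a x)" for k
    using ia a2 by (intro Bochner_Integration.integrable_diff integrable_mult_right) auto
  have ex: "(\<integral>x. (a x - k)^2 \<partial>Q) = (\<integral>x. (a x)^2 \<partial>Q) - 2*k*(\<integral>x. a x \<partial>Q) + k^2" for k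
  proof -
    have "(\<integral>x. (a x - k)^2 \<partial>Q) = (\<integral>x. (a x)^2 - 2*k*a x \<partial>Q) + (\<integral>x. k^2 \<partial>Q)"
      unfolding eq by (rule Bochner_Integration.integral_add[OF i4 ic])
    also have "(\<integral>x. (a x)^2 - 2*k*a x \<partial>Q) = (\<integral>x. (a x)^2 \<partial>Q) - (\<integral>x. 2*k*a x \<partial>Q)"
      by (rule Bochner_Integration.integral_diff[OF a2]) (use ia in auto)
    finally show ?thesis by (simp add: prob_space)
  qed
  show "(\<integral>x. (a x - k)^2 \<partial>Q) = (\<integral>x. (a x)^2 \<partial>Q) - 2*k*(\<integral>x. a x \<partial>Q) + k^2" by (rule ex)
  have "0 \<le> (\<integral>x. (a x - (\<integral>x. a x \<partial>Q))^2 \<partial>Q)" by (rule Bochner_Integration.integral_nonneg) auto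
  then show "(\<integral>x. a x \<partial>Q)^2 \<le> (\<integral>x. (a x)^2 \<partial>Q)" unfolding ex by (simp add: power2_eq_square)
qed


lemma var_pair:
  fixes a :: "'b \<Rightarrow> real"
  assumes P: "prob_space Q" and am: "a \<in> borel_measurable Q" and a2: "integrable Q (\<lambda>x. (a x)^2)"
  shows "(\<integral>\<^sup>+y. \<integral>\<^sup>+z. ennreal ((a y - a z)^2) \<partial>Q \<partial>Q) = ennreal (2*((\<integral>x. (a x)^2 \<partial>Q) - (\<integral>x. a x \<partial>Q)^2))"
proof -
  interpret prob_space Q by fact
  define E2 where "E2 = (\<integral>x. (a x)^2 \<partial>Q)"
  define m where "m = (\<integral>x. a x \<partial>Q)"
  note S = sq_expand[OF P am a2]
  have nn: "0 \<le> E2 - 2*a y*m + (a y)^2" for y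
  proof -
    have "0 \<le> (\<integral>z. (a z - a y)^2 \<partial>Q)" by (rule Bochner_Integration.integral_nonneg) auto
    then show ?thesis using S(3)[of "a y"] by (simp add: E2_def m_def mult.commute mult.left_commute)
  qed
  have inner: "(\<integral>\<^sup>+z. ennreal ((a y - a z)^2) \<partial>Q) = ennreal (E2 - 2*a y*m + (a y)^2)" for y
  proof -
    have "(\<integral>\<^sup>+z. ennreal ((a y - a z)^2) \<partial>Q) = (\<integral>\<^sup>+z. ennreal ((a z - a y)^2) \<partial>Q)"
      by (simp add: power2_commute)
    also have "\<dots> = ennreal (\<integral>z. (a z - a y)^2 \<partial>Q)"
      by (rule nn_integral_eq_integral[OF S(2)]) auto
    also have "(\<integral>z. (a z - a y)^2 \<partial>Q) = E2 - 2*a y*m + (a y)^2"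
      using S(3)[of "a y"] by (simp add: E2_def m_def mult.commute mult.left_commute)
    finally show ?thesis .
  qed
  have int: "integrable Q (\<lambda>y. E2 - 2*a y*m + (a y)^2)"
    using S(1) a2 by (intro Bochner_Integration.integrable_add Bochner_Integration.integrable_diff integrable_mult_left) auto
  have "(\<integral>\<^sup>+y. \<integral>\<^sup>+z. ennreal ((a y - a z)^2) \<partial>Q \<partial>Q) = (\<integral>\<^sup>+y. ennreal (E2 - 2*a y*m + (a y)^2) \<partial>Q)"
    by (simp add: inner)
  also have "\<dots> = ennreal (\<integral>y. E2 - 2*a y*m + (a y)^2 \<partial>Q)"
    by (rule nn_integral_eq_integral[OF int]) (simp add: nn)
  also have "(\<integral>y. E2 - 2*a y*m + (a y)^2 \<partial>Q) = (\<integral>y. E2 - 2*a y*m \<partial>Q) + E2"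
    by (subst Bochner_Integration.integral_add) (use S(1) a2 in \<open>auto simp: E2_def prob_space\<close>)
  also have "(\<integral>y. E2 - 2*a y*m \<partial>Q) = E2 - 2*m*m"
    by (subst Bochner_Integration.integral_diff) (use S(1) in \<open>auto simp: prob_space m_def\<close>)
  finally show ?thesis by (simp add: E2_def m_def power2_eq_square right_diff_distrib mult.assoc)
qed


lemma measurable_merge_pt:
  fixes M :: "nat \<Rightarrow> real measure"
  assumes a: "a \<in> measurable N (PiM K M)" and UK: "U \<subseteq> K" and b: "b \<in> measurable N (PiM V M)"
  shows "(\<lambda>\<omega>. merge_pt U (a \<omega>) (b \<omega>)) \<in> measurable N (PiM (U \<union> V) M)"
proof -
  have eq: "(\<lambda>\<omega>. merge_pt U (a \<omega>) (b \<omega>)) = (\<lambda>\<omega> j. (\<lambda>j \<omega>. if j \<in> U then a \<omega> j else b \<omega> j) j \<omega>)"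
    by (simp add: merge_pt_def fun_eq_iff)
  show ?thesis unfolding eq
  proof (rule measurable_PiM_single')
    fix j assume j: "j \<in> U \<union> V"
    show "(\<lambda>\<omega>. if j \<in> U then a \<omega> j else b \<omega> j) \<in> measurable N (M j)"
    proof (cases "j \<in> U")
      case True
      then have "j \<in> K" using UK by auto
      then show ?thesis using True measurable_compose[OF a measurable_component_singleton[of j K M]] by simp
    next
      case False
      then have "j \<in> V" using j by auto
      then show ?thesis using False measurable_compose[OF b measurable_component_singleton[of j V M]] by simp
    qed
  next
    show "(\<lambda>\<omega> j. if j \<in> U then a \<omega> j else b \<omega> j) \<in> space N \<rightarrow> (\<Pi>\<^sub>E i\<in>U \<union> V. space (M i))"
    proof
      fix \<omega> assume w: "\<omega> \<in> space N"
      have aw: "a \<omega> \<in> (\<Pi>\<^sub>E i\<in>K. space (M i))" using measurable_space[OF a w] by (simp add: space_PiM)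
      have bw: "b \<omega> \<in> (\<Pi>\<^sub>E i\<in>V. space (M i))" using measurable_space[OF b w] by (simp add: space_PiM)
      show "(\<lambda>j. if j \<in> U then a \<omega> j else b \<omega> j) \<in> (\<Pi>\<^sub>E i\<in>U \<union> V. space (M i))"
        using aw bw UK by (auto simp: PiE_iff extensional_def)
    qed
  qed
qed

lemma mp_eq:
  fixes M :: "nat \<Rightarrow> real measure"
  shows "\<eta> \<in> space (PiM V M) \<Longrightarrow> merge_pt U \<theta> \<eta> = merge U V (\<theta>, \<eta>)"
  by (auto simp: merge_pt_def merge_def space_PiM PiE_iff extensional_def fun_eq_iff)

lemma mp_mp: "merge_pt U (merge_pt U x y) z = merge_pt U x z"
  by (simp add: merge_pt_def fun_eq_iff)



lemma core:
  fixes M :: "nat \<Rightarrow> real measure" and g :: "(nat \<Rightarrow> real) \<Rightarrow> real"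
  assumes prob: "\<And>i. prob_space (M i)" and finU: "finite U" and finV: "finite V" and disj: "U \<inter> V = {}"
    and gm[measurable]: "g \<in> borel_measurable (PiM (U \<union> V) M)"
    and g2: "integrable (PiM (U \<union> V) M) (\<lambda>\<theta>. (g \<theta>)^2)"
  defines "c \<equiv> \<lambda>x. \<integral>\<zeta>. g (merge_pt U x \<zeta>) \<partial>PiM V M"
  shows core_nn: "(\<integral>\<^sup>+\<eta>. \<integral>\<^sup>+\<theta>. ennreal ((g \<theta> - g (merge_pt U \<theta> \<eta>))^2) \<partial>PiM (U\<union>V) M \<partial>PiM V M)
           = ennreal (2*((\<integral>\<theta>. (g \<theta>)^2 \<partial>PiM (U\<union>V) M) - (\<integral>x. (c x)^2 \<partial>PiM U M)))"
   and core_le: "(\<integral>x. (c x)^2 \<partial>PiM U M) \<le> (\<integral>\<theta>. (g \<theta>)^2 \<partial>PiM (U\<union>V) M)"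
   and core_D: "(\<integral>\<theta>. (g \<theta> - (\<integral>\<theta>. g \<theta> \<partial>PiM (U\<union>V) M))^2 \<partial>PiM (U\<union>V) M)
              - (\<integral>x. (c x - (\<integral>\<theta>. g \<theta> \<partial>PiM (U\<union>V) M))^2 \<partial>PiM U M)
             = (\<integral>\<theta>. (g \<theta>)^2 \<partial>PiM (U\<union>V) M) - (\<integral>x. (c x)^2 \<partial>PiM U M)"
proof -
  interpret PS: product_prob_space M "{}"
    by (simp add: product_prob_space_def product_sigma_finite_def product_prob_space_axioms_def prob prob_space_imp_sigma_finite)
  have pU: "prob_space (PiM U M)" by (rule prob_space_PiM) (rule prob)
  have pV: "prob_space (PiM V M)" by (rule prob_space_PiM) (rule prob)
  have pP: "prob_space (PiM (U\<union>V) M)" by (rule prob_space_PiM) (rule prob)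
  interpret PU: prob_space "PiM U M" by (rule pU)
  interpret PV: prob_space "PiM V M" by (rule pV)
  interpret P: prob_space "PiM (U\<union>V) M" by (rule pP)
  interpret UV: pair_sigma_finite "PiM U M" "PiM V M"
    by (simp add: pair_sigma_finite_def prob_space_imp_sigma_finite pU pV)
  define h where "h x y = g (merge_pt U x y)" for x y
  have hm: "(\<lambda>\<omega>. h (A \<omega>) (B \<omega>)) \<in> borel_measurable N"
    if "A \<in> measurable N (PiM U M)" "B \<in> measurable N (PiM V M)" for N A B
    unfolding h_def by (rule measurable_compose[OF measurable_merge_pt[OF that(1) _ that(2)] gm]) simp
  have mm: "(\<lambda>z. merge_pt U (fst z) (snd z)) \<in> measurable (PiM U M \<Otimes>\<^sub>M PiM V M) (PiM (U\<union>V) M)"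
    by (rule measurable_merge_pt) auto
  have dm: "distr (PiM U M \<Otimes>\<^sub>M PiM V M) (PiM (U\<union>V) M) (\<lambda>z. merge_pt U (fst z) (snd z)) = PiM (U\<union>V) M"
  proof -
    have "distr (PiM U M \<Otimes>\<^sub>M PiM V M) (PiM (U\<union>V) M) (\<lambda>z. merge_pt U (fst z) (snd z))
        = distr (PiM U M \<Otimes>\<^sub>M PiM V M) (PiM (U\<union>V) M) (merge U V)"
      by (rule distr_cong) (auto simp: space_pair_measure mp_eq)
    also have "\<dots> = PiM (U\<union>V) M" by (rule PS.distr_merge[OF disj finU finV])
    finally show ?thesis .
  qed
  have hm2[measurable]: "(\<lambda>z. h (fst z) (snd z)) \<in> borel_measurable (PiM U M \<Otimes>\<^sub>M PiM V M)"
    by (rule hm) auto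
  have gi: "integrable (PiM (U\<union>V) M) g" by (rule P.square_integrable_imp_integrable[OF gm g2])
  have hi2: "integrable (PiM U M \<Otimes>\<^sub>M PiM V M) (\<lambda>z. (h (fst z) (snd z))^2)"
    using g2 unfolding h_def by (subst (asm) dm[symmetric]) (subst (asm) integrable_distr_eq[OF mm]; simp)
  have hi: "integrable (PiM U M \<Otimes>\<^sub>M PiM V M) (\<lambda>z. h (fst z) (snd z))"
    using gi unfolding h_def by (subst (asm) dm[symmetric]) (subst (asm) integrable_distr_eq[OF mm]; simp)
  define F where "F x = (\<integral>y. (h x y)^2 \<partial>PiM V M)" for x
  have iF: "integrable (PiM U M) F"
    using UV.integrable_fst'[OF hi2] by (simp add: F_def[abs_def])
  have intF: "(\<integral>x. F x \<partial>PiM U M) = (\<integral>\<theta>. (g \<theta>)^2 \<partial>PiM (U\<union>V) M)"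
  proof -
    have "(\<integral>x. F x \<partial>PiM U M) = (\<integral>z. (h (fst z) (snd z))^2 \<partial>(PiM U M \<Otimes>\<^sub>M PiM V M))"
      using UV.integral_fst'[OF hi2] by (simp add: F_def)
    also have "\<dots> = (\<integral>\<theta>. (g \<theta>)^2 \<partial>distr (PiM U M \<Otimes>\<^sub>M PiM V M) (PiM (U\<union>V) M) (\<lambda>z. merge_pt U (fst z) (snd z)))"
      by (subst integral_distr[OF mm]) (auto simp: h_def)
    finally show ?thesis by (simp only: dm)
  qed
  have ch: "c x = (\<integral>y. h x y \<partial>PiM V M)" for x by (simp add: c_def h_def)
  have intc: "(\<integral>x. c x \<partial>PiM U M) = (\<integral>\<theta>. g \<theta> \<partial>PiM (U\<union>V) M)"
  proof -
    have "(\<integral>x. c x \<partial>PiM U M) = (\<integral>z. h (fst z) (snd z) \<partial>(PiM U M \<Otimes>\<^sub>M PiM V M))"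
      using UV.integral_fst'[OF hi] by (simp add: ch)
    also have "\<dots> = (\<integral>\<theta>. g \<theta> \<partial>distr (PiM U M \<Otimes>\<^sub>M PiM V M) (PiM (U\<union>V) M) (\<lambda>z. merge_pt U (fst z) (snd z)))"
      by (subst integral_distr[OF mm]) (auto simp: h_def)
    finally show ?thesis by (simp only: dm)
  qed
  have hx: "(\<lambda>y. h x y) \<in> borel_measurable (PiM V M)" if "x \<in> space (PiM U M)" for x
    by (rule hm) (use that in auto)
  have cm: "c \<in> borel_measurable (PiM U M)"
    unfolding ch using PV.borel_measurable_lebesgue_integral[of "\<lambda>x y. h x y" "PiM U M"] hm2
    by (simp add: split_beta')
  have AEi: "AE x in PiM U M. integrable (PiM V M) (\<lambda>y. (h x y)^2)"
    using UV.AE_integrable_fst'[OF hi2] by simp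
  have AEc: "AE x in PiM U M. (c x)^2 \<le> F x"
    using AEi
  proof (rule AE_mp[OF _ AE_I2], intro impI)
    fix x assume x: "x \<in> space (PiM U M)" and i: "integrable (PiM V M) (\<lambda>y. (h x y)^2)"
    show "(c x)^2 \<le> F x" unfolding ch F_def by (rule sq_expand(4)[OF pV hx[OF x] i])
  qed
  have Fnn: "0 \<le> F x" for x unfolding F_def by (rule Bochner_Integration.integral_nonneg) auto
  have ic2: "integrable (PiM U M) (\<lambda>x. (c x)^2)"
    by (rule Bochner_Integration.integrable_bound[OF iF]) (use cm in simp, use AEc Fnn in auto)
  show core_le: "(\<integral>x. (c x)^2 \<partial>PiM U M) \<le> (\<integral>\<theta>. (g \<theta>)^2 \<partial>PiM (U\<union>V) M)"
    unfolding intF[symmetric] by (rule Bochner_Integration.integral_mono_AE[OF ic2 iF AEc])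
  show core_D: "(\<integral>\<theta>. (g \<theta> - (\<integral>\<theta>. g \<theta> \<partial>PiM (U\<union>V) M))^2 \<partial>PiM (U\<union>V) M)
              - (\<integral>x. (c x - (\<integral>\<theta>. g \<theta> \<partial>PiM (U\<union>V) M))^2 \<partial>PiM U M)
             = (\<integral>\<theta>. (g \<theta>)^2 \<partial>PiM (U\<union>V) M) - (\<integral>x. (c x)^2 \<partial>PiM U M)"
    using sq_expand(3)[OF pP gm g2, of "\<integral>\<theta>. g \<theta> \<partial>PiM (U\<union>V) M"]
      sq_expand(3)[OF pU cm ic2, of "\<integral>\<theta>. g \<theta> \<partial>PiM (U\<union>V) M"] intc
    by (simp add: power2_eq_square)
  show core_nn: "(\<integral>\<^sup>+\<eta>. \<integral>\<^sup>+\<theta>. ennreal ((g \<theta> - g (merge_pt U \<theta> \<eta>))^2) \<partial>PiM (U\<union>V) M \<partial>PiM V M)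
           = ennreal (2*((\<integral>\<theta>. (g \<theta>)^2 \<partial>PiM (U\<union>V) M) - (\<integral>x. (c x)^2 \<partial>PiM U M)))"
  proof -
    have step1: "(\<integral>\<^sup>+\<theta>. ennreal ((g \<theta> - g (merge_pt U \<theta> \<eta>))^2) \<partial>PiM (U\<union>V) M)
        = (\<integral>\<^sup>+z. ennreal ((h (fst z) (snd z) - h (fst z) \<eta>)^2) \<partial>(PiM U M \<Otimes>\<^sub>M PiM V M))"
      if \<eta>: "\<eta> \<in> space (PiM V M)" for \<eta>
    proof -
      have mg: "(\<lambda>\<theta>. g (merge_pt U \<theta> \<eta>)) \<in> borel_measurable (PiM (U\<union>V) M)"
        by (rule measurable_compose[OF measurable_merge_pt[OF measurable_ident_sets[OF refl] _ measurable_const[OF \<eta>]] gm]) simp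
      have m: "(\<lambda>\<theta>. ennreal ((g \<theta> - g (merge_pt U \<theta> \<eta>))^2)) \<in> borel_measurable (PiM (U\<union>V) M)"
        using mg by measurable
      have "(\<integral>\<^sup>+\<theta>. ennreal ((g \<theta> - g (merge_pt U \<theta> \<eta>))^2) \<partial>PiM (U\<union>V) M)
          = (\<integral>\<^sup>+\<theta>. ennreal ((g \<theta> - g (merge_pt U \<theta> \<eta>))^2) \<partial>distr (PiM U M \<Otimes>\<^sub>M PiM V M) (PiM (U\<union>V) M) (\<lambda>z. merge_pt U (fst z) (snd z)))"
        by (simp only: dm)
      also have "\<dots> = (\<integral>\<^sup>+z. ennreal ((g (merge_pt U (fst z) (snd z)) - g (merge_pt U (merge_pt U (fst z) (snd z)) \<eta>))^2) \<partial>(PiM U M \<Otimes>\<^sub>M PiM V M))"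
        by (rule nn_integral_distr[OF mm]) (subst dm, rule m)
      also have "\<dots> = (\<integral>\<^sup>+z. ennreal ((h (fst z) (snd z) - h (fst z) \<eta>)^2) \<partial>(PiM U M \<Otimes>\<^sub>M PiM V M))"
        by (simp add: h_def mp_mp)
      finally show ?thesis .
    qed
    have step2: "(\<integral>\<^sup>+z. ennreal ((h (fst z) (snd z) - h (fst z) \<eta>)^2) \<partial>(PiM U M \<Otimes>\<^sub>M PiM V M))
        = (\<integral>\<^sup>+x. \<integral>\<^sup>+y. ennreal ((h x y - h x \<eta>)^2) \<partial>PiM V M \<partial>PiM U M)"
      if \<eta>: "\<eta> \<in> space (PiM V M)" for \<eta>
    proof -
      have a: "(\<lambda>z. h (fst z) \<eta>) \<in> borel_measurable (PiM U M \<Otimes>\<^sub>M PiM V M)"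
        by (rule hm) (use \<eta> in auto)
      have "(\<lambda>z. ennreal ((h (fst z) (snd z) - h (fst z) \<eta>)^2)) \<in> borel_measurable (PiM U M \<Otimes>\<^sub>M PiM V M)"
        using a by measurable
      from PV.nn_integral_fst[OF this] show ?thesis by simp
    qed
    have m3a: "(\<lambda>w. h (fst (fst w)) (snd w)) \<in> borel_measurable ((PiM U M \<Otimes>\<^sub>M PiM V M) \<Otimes>\<^sub>M PiM V M)"
      by (rule hm) auto
    have m3b: "(\<lambda>w. h (fst (fst w)) (snd (fst w))) \<in> borel_measurable ((PiM U M \<Otimes>\<^sub>M PiM V M) \<Otimes>\<^sub>M PiM V M)"
      by (rule hm) auto
    have m3: "(\<lambda>w. ennreal ((h (fst (fst w)) (snd w) - h (fst (fst w)) (snd (fst w)))^2)) \<in> borel_measurable ((PiM U M \<Otimes>\<^sub>M PiM V M) \<Otimes>\<^sub>M PiM V M)"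
      using m3a m3b by measurable
    have m4: "(\<lambda>z. \<integral>\<^sup>+y. ennreal ((h (fst z) y - h (fst z) (snd z))^2) \<partial>PiM V M) \<in> borel_measurable (PiM U M \<Otimes>\<^sub>M PiM V M)"
      using PV.borel_measurable_nn_integral_fst[OF m3] by simp
    have step3: "(\<integral>\<^sup>+\<eta>. \<integral>\<^sup>+x. \<integral>\<^sup>+y. ennreal ((h x y - h x \<eta>)^2) \<partial>PiM V M \<partial>PiM U M \<partial>PiM V M)
        = (\<integral>\<^sup>+x. \<integral>\<^sup>+\<eta>. \<integral>\<^sup>+y. ennreal ((h x y - h x \<eta>)^2) \<partial>PiM V M \<partial>PiM V M \<partial>PiM U M)"
      by (rule UV.Fubini'[of "\<lambda>x \<eta>. \<integral>\<^sup>+y. ennreal ((h x y - h x \<eta>)^2) \<partial>PiM V M"]) (use m4 in \<open>simp add: split_beta'\<close>)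
    have step4: "AE x in PiM U M. (\<integral>\<^sup>+\<eta>. \<integral>\<^sup>+y. ennreal ((h x y - h x \<eta>)^2) \<partial>PiM V M \<partial>PiM V M)
        = ennreal (2 * (F x - (c x)^2))"
      using AEi
    proof (rule AE_mp[OF _ AE_I2], intro impI)
      fix x assume x: "x \<in> space (PiM U M)" and i: "integrable (PiM V M) (\<lambda>y. (h x y)^2)"
      have "(\<integral>\<^sup>+\<eta>. \<integral>\<^sup>+y. ennreal ((h x y - h x \<eta>)^2) \<partial>PiM V M \<partial>PiM V M)
          = (\<integral>\<^sup>+\<eta>. \<integral>\<^sup>+y. ennreal ((h x \<eta> - h x y)^2) \<partial>PiM V M \<partial>PiM V M)"
        by (simp add: power2_commute)
      also have "\<dots> = ennreal (2 * (F x - (c x)^2))"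
        unfolding F_def ch by (rule var_pair[OF pV hx[OF x] i])
      finally show "(\<integral>\<^sup>+\<eta>. \<integral>\<^sup>+y. ennreal ((h x y - h x \<eta>)^2) \<partial>PiM V M \<partial>PiM V M)
        = ennreal (2 * (F x - (c x)^2))" .
    qed
    have i5: "integrable (PiM U M) (\<lambda>x. 2 * (F x - (c x)^2))"
      using iF ic2 by (intro integrable_mult_right Bochner_Integration.integrable_diff)
    have "(\<integral>\<^sup>+\<eta>. \<integral>\<^sup>+\<theta>. ennreal ((g \<theta> - g (merge_pt U \<theta> \<eta>))^2) \<partial>PiM (U\<union>V) M \<partial>PiM V M)
        = (\<integral>\<^sup>+\<eta>. \<integral>\<^sup>+x. \<integral>\<^sup>+y. ennreal ((h x y - h x \<eta>)^2) \<partial>PiM V M \<partial>PiM U M \<partial>PiM V M)"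
      by (rule nn_integral_cong) (simp add: step1 step2)
    also have "\<dots> = (\<integral>\<^sup>+x. \<integral>\<^sup>+\<eta>. \<integral>\<^sup>+y. ennreal ((h x y - h x \<eta>)^2) \<partial>PiM V M \<partial>PiM V M \<partial>PiM U M)"
      by (rule step3)
    also have "\<dots> = (\<integral>\<^sup>+x. ennreal (2 * (F x - (c x)^2)) \<partial>PiM U M)"
      by (rule nn_integral_cong_AE[OF step4])
    also have "\<dots> = ennreal (\<integral>x. 2 * (F x - (c x)^2) \<partial>PiM U M)"
      by (rule nn_integral_eq_integral[OF i5]) (use AEc in auto)
    also have "(\<integral>x. 2 * (F x - (c x)^2) \<partial>PiM U M) = 2*((\<integral>\<theta>. (g \<theta>)^2 \<partial>PiM (U\<union>V) M) - (\<integral>x. (c x)^2 \<partial>PiM U M))"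
      using iF ic2 intF by (simp add: Bochner_Integration.integral_diff)
    finally show ?thesis .
  qed
qed



theorem proposition2p2:
  fixes N :: nat and Th :: "nat \<Rightarrow> real set" and p :: "nat \<Rightarrow> real \<Rightarrow> real"
    and X :: "'a::euclidean_space set" and f :: "'a \<Rightarrow> (nat \<Rightarrow> real) \<Rightarrow> real"
    and U :: "nat set"
  assumes dim: "DIM('a) \<in> {1, 2, 3}"
    and Th_sets: "\<And>j. j \<in> {1..N} \<Longrightarrow> Th j \<in> sets borel"
    and p_meas: "\<And>j. j \<in> {1..N} \<Longrightarrow> p j \<in> borel_measurable borel"
    and p_nonneg: "\<And>j x. j \<in> {1..N} \<Longrightarrow> x \<in> Th j \<Longrightarrow> 0 \<le> p j x"
    and p_prob: "\<And>j. j \<in> {1..N} \<Longrightarrow> (\<integral>\<^sup>+ x. ennreal (indicator (Th j) x * p j x) \<partial>lborel) = 1"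
    and X_compact: "compact X"
    and f_meas: "(\<lambda>(s, th). f s th) \<in> borel_measurable
                   (restrict_space lborel X \<Otimes>\<^sub>M PiM {1..N} (\<lambda>j. theta_measure (Th j) (p j)))"
    and f_L2: "integrable (restrict_space lborel X \<Otimes>\<^sub>M PiM {1..N} (\<lambda>j. theta_measure (Th j) (p j)))
                 (\<lambda>(s, th). (f s th)\<^sup>2)"
    and D_pos: "AE s in lborel. s \<in> X \<longrightarrow> sob_D (\<lambda>j. theta_measure (Th j) (p j)) {1..N} f s > 0"
    and U_sub: "U \<subseteq> {1..N}"
  shows "(\<integral>eta. rel_mse (\<lambda>j. theta_measure (Th j) (p j)) {1..N} U f X eta
            \<partial>PiM ({1..N} - U) (\<lambda>j. theta_measure (Th j) (p j)))
         \<le> 2 * sobol_tot (\<lambda>j. theta_measure (Th j) (p j)) {1..N} ({1..N} - U) f X"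
proof -
  define I where "I = {1..N}"
  define M where "M = (\<lambda>j. theta_measure (Th j) (p j))"
  define M' where "M' = (\<lambda>j. if j \<in> I then M j else return lborel 0)"
  have dd: "I - (I - U) = U" using U_sub by (auto simp: I_def)
  have PiM_eq: "PiM K M = PiM K M'" if "K \<subseteq> I" for K
    by (rule PiM_cong) (use that in \<open>auto simp: M'_def\<close>)
  have e1: "PiM I M = PiM I M'" "PiM U M = PiM U M'" "PiM (I - U) M = PiM (I - U) M'"
    using PiM_eq U_sub by (auto simp: I_def)
  have finI: "finite I" by (simp add: I_def)
  have UI: "U \<subseteq> I" using U_sub by (simp add: I_def)
  have uv: "U \<union> (I - U) = I" "U \<union> I = I" using U_sub by (auto simp: I_def)
  have probM': "prob_space (M' i)" for i
  proof (cases "i \<in> I")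
    case True
    have pm: "(\<lambda>x. ennreal (indicator (Th i) x * p i x)) \<in> borel_measurable lborel"
      using Th_sets[of i] p_meas[of i] True unfolding I_def by measurable
    show ?thesis
      using True p_prob[of i] unfolding I_def
      by (auto simp: M'_def M_def theta_measure_def I_def intro!: prob_spaceI simp: emeasure_density[OF pm])
  next
    case False
    then show ?thesis by (simp add: M'_def prob_space_return)
  qed
  interpret PI: prob_space "PiM I M'" by (rule prob_space_PiM) (rule probM')
  interpret PU: prob_space "PiM U M'" by (rule prob_space_PiM) (rule probM')
  interpret PV: prob_space "PiM (I - U) M'" by (rule prob_space_PiM) (rule probM')
  have Xs: "X \<in> sets lborel" using X_compact by (simp add: borel_closed compact_imp_closed)
  interpret S: sigma_finite_measure "restrict_space lborel X"
    by (rule sigma_finite_measure_restrict_space[OF lborel.sigma_finite_measure_axioms Xs])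
  interpret SP: pair_sigma_finite "restrict_space lborel X" "PiM I M'" ..
  interpret SV: pair_sigma_finite "restrict_space lborel X" "PiM (I - U) M'" ..
  interpret SU: pair_sigma_finite "restrict_space lborel X" "PiM U M'" ..
  have fM: "(\<lambda>(s, th). f s th) \<in> borel_measurable (restrict_space lborel X \<Otimes>\<^sub>M PiM I M')"
    using f_meas unfolding M_def[symmetric] I_def[symmetric] e1(1) .
  have fL2: "integrable (restrict_space lborel X \<Otimes>\<^sub>M PiM I M') (\<lambda>(s, th). (f s th)\<^sup>2)"
    using f_L2 unfolding M_def[symmetric] I_def[symmetric] e1(1) .
  have fm: "(\<lambda>\<omega>. f (A \<omega>) (B \<omega>)) \<in> borel_measurable N"
    if "A \<in> measurable N (restrict_space lborel X)" "B \<in> measurable N (PiM I M')" for N A B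
    using measurable_compose[OF measurable_Pair[OF that] fM] by simp
  have LS: "set_lebesgue_integral lborel X \<phi> = integral\<^sup>L (restrict_space lborel X) \<phi>" for \<phi> :: "'a \<Rightarrow> real"
    using Xs by (simp add: set_lebesgue_integral_def integral_restrict_space)
  define S where "S = restrict_space lborel X"
  define PI where "PI = PiM I M'"
  define PU where "PU = PiM U M'"
  define PV where "PV = PiM (I - U) M'"
  note defsM = S_def PI_def PU_def PV_def
  define E2 where "E2 s = (\<integral>\<theta>. (f s \<theta>)^2 \<partial>PI)" for s
  define f0 where "f0 s = (\<integral>\<theta>. f s \<theta> \<partial>PI)" for s
  define c where "c s x = (\<integral>\<zeta>. f s (merge_pt U x \<zeta>) \<partial>PV)" for s x
  define Cs where "Cs s = (\<integral>x. (c s x)^2 \<partial>PU)" for s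
  define D where "D s = (\<integral>\<theta>. (f s \<theta> - f0 s)^2 \<partial>PI)" for s
  define DU where "DU s = (\<integral>x. (c s x - f0 s)^2 \<partial>PU)" for s
  define a where "a s \<eta> = (\<integral>\<theta>. (f s \<theta> - f s (merge_pt U \<theta> \<eta>))^2 \<partial>PI)" for s \<eta>
  have fz: "(\<lambda>z. f (fst z) (snd z)) \<in> borel_measurable (S \<Otimes>\<^sub>M PI)"
    by (rule fm) (auto simp: defsM)
  have mE2: "E2 \<in> borel_measurable S"
    using PI.borel_measurable_lebesgue_integral[of "\<lambda>s \<theta>. (f s \<theta>)^2" S] fz
    unfolding E2_def[abs_def] defsM by (simp add: split_beta')
  have mf0[measurable]: "f0 \<in> borel_measurable S"
    using PI.borel_measurable_lebesgue_integral[of "\<lambda>s \<theta>. f s \<theta>" S] fz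
    unfolding f0_def[abs_def] defsM by (simp add: split_beta')
  have mD: "D \<in> borel_measurable S"
  proof -
    have "(\<lambda>z. (f (fst z) (snd z) - f0 (fst z))^2) \<in> borel_measurable (S \<Otimes>\<^sub>M PI)"
      using fz by measurable
    then show ?thesis
      using PI.borel_measurable_lebesgue_integral[of "\<lambda>s \<theta>. (f s \<theta> - f0 s)^2" S]
      unfolding D_def[abs_def] defsM by (simp add: split_beta')
  qed
  have mc: "(\<lambda>z. c (fst z) (snd z)) \<in> borel_measurable (S \<Otimes>\<^sub>M PU)"
  proof -
    have mp: "(\<lambda>w. merge_pt U (snd (fst w)) (snd w)) \<in> measurable ((S \<Otimes>\<^sub>M PU) \<Otimes>\<^sub>M PV) PI"
      using measurable_merge_pt[of "\<lambda>w. snd (fst w)" "(S \<Otimes>\<^sub>M PU) \<Otimes>\<^sub>M PV" U M' U "\<lambda>w. snd w" "I - U"]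
      by (simp add: defsM uv)
    have "(\<lambda>w. f (fst (fst w)) (merge_pt U (snd (fst w)) (snd w))) \<in> borel_measurable ((S \<Otimes>\<^sub>M PU) \<Otimes>\<^sub>M PV)"
      by (rule fm) (use mp in \<open>auto simp: defsM\<close>)
    then show ?thesis
      using PV.borel_measurable_lebesgue_integral[of "\<lambda>z \<zeta>. f (fst z) (merge_pt U (snd z) \<zeta>)" "S \<Otimes>\<^sub>M PU"]
      unfolding c_def[abs_def] defsM by (simp add: split_beta')
  qed
  have mDU: "DU \<in> borel_measurable S"
  proof -
    have "(\<lambda>z. (c (fst z) (snd z) - f0 (fst z))^2) \<in> borel_measurable (S \<Otimes>\<^sub>M PU)"
      using mc by measurable
    then show ?thesis
      using PU.borel_measurable_lebesgue_integral[of "\<lambda>s x. (c s x - f0 s)^2" S]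
      unfolding DU_def[abs_def] defsM by (simp add: split_beta')
  qed
  have mH: "(\<lambda>w. (f (fst (fst w)) (snd w) - f (fst (fst w)) (merge_pt U (snd w) (snd (fst w))))^2)
      \<in> borel_measurable ((S \<Otimes>\<^sub>M PV) \<Otimes>\<^sub>M PI)"
  proof -
    have mp: "(\<lambda>w. merge_pt U (snd w) (snd (fst w))) \<in> measurable ((S \<Otimes>\<^sub>M PV) \<Otimes>\<^sub>M PI) PI"
      using measurable_merge_pt[of "\<lambda>w. snd w" "(S \<Otimes>\<^sub>M PV) \<Otimes>\<^sub>M PI" I M' U "\<lambda>w. snd (fst w)" "I - U"] UI
      by (simp add: defsM uv)
    have "(\<lambda>w. f (fst (fst w)) (merge_pt U (snd w) (snd (fst w)))) \<in> borel_measurable ((S \<Otimes>\<^sub>M PV) \<Otimes>\<^sub>M PI)"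
      by (rule fm) (use mp in \<open>auto simp: defsM\<close>)
    moreover have "(\<lambda>w. f (fst (fst w)) (snd w)) \<in> borel_measurable ((S \<Otimes>\<^sub>M PV) \<Otimes>\<^sub>M PI)"
      by (rule fm) (auto simp: defsM)
    ultimately show ?thesis by measurable
  qed
  have ma: "(\<lambda>z. a (fst z) (snd z)) \<in> borel_measurable (S \<Otimes>\<^sub>M PV)"
    using PI.borel_measurable_lebesgue_integral[of "\<lambda>z \<theta>. (f (fst z) \<theta> - f (fst z) (merge_pt U \<theta> (snd z)))^2" "S \<Otimes>\<^sub>M PV"] mH
    unfolding a_def[abs_def] defsM by (simp add: split_beta')
  have maN: "(\<lambda>z. \<integral>\<^sup>+\<theta>. ennreal ((f (fst z) \<theta> - f (fst z) (merge_pt U \<theta> (snd z)))^2) \<partial>PI) \<in> borel_measurable (S \<Otimes>\<^sub>M PV)"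
  proof -
    have "(\<lambda>w. ennreal ((f (fst (fst w)) (snd w) - f (fst (fst w)) (merge_pt U (snd w) (snd (fst w))))^2))
      \<in> borel_measurable ((S \<Otimes>\<^sub>M PV) \<Otimes>\<^sub>M PI)" using mH by measurable
    then show ?thesis
      using PI.borel_measurable_nn_integral[of "\<lambda>z \<theta>. ennreal ((f (fst z) \<theta> - f (fst z) (merge_pt U \<theta> (snd z)))^2)" "S \<Otimes>\<^sub>M PV"]
      unfolding defsM by (simp add: split_beta')
  qed
  have fL2': "integrable (S \<Otimes>\<^sub>M PI) (\<lambda>z. (f (fst z) (snd z))^2)"
    using fL2 by (simp add: defsM split_beta')
  have AEs: "AE s in S. integrable PI (\<lambda>\<theta>. (f s \<theta>)^2)"
    unfolding defsM using SP.AE_integrable_fst'[OF fL2'[unfolded defsM]] by simp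
  have iE2: "integrable S E2"
    using SP.integrable_fst'[OF fL2'[unfolded defsM]] unfolding E2_def[abs_def] defsM by simp
  have finU: "finite U" using finite_subset[OF UI finI] .
  have finV: "finite (I - U)" using finI by simp
  have disj: "U \<inter> (I - U) = {}" by auto
  have per_s: "(\<integral>\<^sup>+\<eta>. ennreal (a s \<eta>) \<partial>PV) = ennreal (2*(E2 s - Cs s)) \<and> (\<integral>\<eta>. a s \<eta> \<partial>PV) = 2*(E2 s - Cs s)
      \<and> Cs s \<le> E2 s \<and> D s - DU s = E2 s - Cs s \<and> D s \<le> E2 s"
    if sS: "s \<in> space S" and s2: "integrable PI (\<lambda>\<theta>. (f s \<theta>)^2)" for s
  proof -
    have gm: "f s \<in> borel_measurable PI"
      using fm[of "\<lambda>_. s" PI "\<lambda>\<omega>. \<omega>"] sS by (simp add: defsM)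
    have gm': "f s \<in> borel_measurable (PiM (U \<union> (I - U)) M')" using gm by (simp add: uv PI_def)
    have g2': "integrable (PiM (U \<union> (I - U)) M') (\<lambda>\<theta>. (f s \<theta>)^2)" using s2 by (simp add: uv PI_def)
    note C = core[OF probM' finU finV disj gm' g2', unfolded uv(1), folded PI_def PU_def PV_def]
    have Ceq: "(\<integral>x. ((\<integral>\<zeta>. f s (merge_pt U x \<zeta>) \<partial>PV))^2 \<partial>PU) = Cs s"
      by (simp add: Cs_def c_def)
    have N1: "(\<integral>\<^sup>+\<eta>. \<integral>\<^sup>+\<theta>. ennreal ((f s \<theta> - f s (merge_pt U \<theta> \<eta>))^2) \<partial>PI \<partial>PV) = ennreal (2*(E2 s - Cs s))"
      using C(1) unfolding Ceq E2_def .
    have N2: "Cs s \<le> E2 s" using C(2) unfolding Ceq E2_def .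
    have N3: "D s - DU s = E2 s - Cs s" using C(3) unfolding D_def DU_def f0_def c_def Cs_def E2_def by simp
    have R5: "D s \<le> E2 s"
      using sq_expand(3)[OF PI.prob_space_axioms[folded PI_def] gm s2, of "f0 s"] unfolding D_def E2_def f0_def
      by (simp add: power2_eq_square)
    have Hm: "(\<lambda>\<theta>. (f s \<theta> - f s (merge_pt U \<theta> \<eta>))^2) \<in> borel_measurable PI" if \<eta>: "\<eta> \<in> space PV" for \<eta>
    proof -
      have "(\<lambda>\<theta>. merge_pt U \<theta> \<eta>) \<in> measurable PI PI"
        using measurable_merge_pt[of "\<lambda>\<theta>. \<theta>" PI I M' U "\<lambda>_. \<eta>" "I - U"] UI \<eta>
        by (simp add: defsM uv)
      then have "(\<lambda>\<theta>. f s (merge_pt U \<theta> \<eta>)) \<in> borel_measurable PI"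
        using fm[of "\<lambda>_. s" PI "\<lambda>\<theta>. merge_pt U \<theta> \<eta>"] sS by (simp add: defsM)
      with gm show ?thesis by measurable
    qed
    have aeq: "a s \<eta> = enn2real (\<integral>\<^sup>+\<theta>. ennreal ((f s \<theta> - f s (merge_pt U \<theta> \<eta>))^2) \<partial>PI)" if \<eta>: "\<eta> \<in> space PV" for \<eta>
      unfolding a_def by (rule integral_eq_nn_integral[OF Hm[OF \<eta>]]) auto
    have HNm: "(\<lambda>\<eta>. \<integral>\<^sup>+\<theta>. ennreal ((f s \<theta> - f s (merge_pt U \<theta> \<eta>))^2) \<partial>PI) \<in> borel_measurable PV"
      using measurable_Pair2[OF maN, of s] sS by simp
    have fin: "AE \<eta> in PV. (\<integral>\<^sup>+\<theta>. ennreal ((f s \<theta> - f s (merge_pt U \<theta> \<eta>))^2) \<partial>PI) \<noteq> \<infinity>"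
      by (rule nn_integral_PInf_AE[OF HNm]) (simp add: N1)
    have R1: "(\<integral>\<^sup>+\<eta>. ennreal (a s \<eta>) \<partial>PV) = ennreal (2*(E2 s - Cs s))"
      unfolding N1[symmetric]
      by (rule nn_integral_cong_AE) (use fin in \<open>auto simp: aeq less_top\<close>)
    have ams: "(\<lambda>\<eta>. a s \<eta>) \<in> borel_measurable PV"
      using measurable_Pair2[OF ma, of s] sS by simp
    have R2: "(\<integral>\<eta>. a s \<eta> \<partial>PV) = 2*(E2 s - Cs s)"
      using integral_eq_nn_integral[OF ams] R1 N2 by (simp add: a_def)
    show ?thesis using R1 R2 N2 N3 R5 by blast
  qed
  have AEp: "AE s in S. (\<integral>\<^sup>+\<eta>. ennreal (a s \<eta>) \<partial>PV) = ennreal (2*(E2 s - Cs s)) \<and> (\<integral>\<eta>. a s \<eta> \<partial>PV) = 2*(E2 s - Cs s)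
      \<and> Cs s \<le> E2 s \<and> D s - DU s = E2 s - Cs s \<and> D s \<le> E2 s"
    using AEs
  proof (rule AE_mp[OF _ AE_I2], intro impI)
    fix s assume "s \<in> space S" "integrable PI (\<lambda>\<theta>. (f s \<theta>)^2)"
    then show "(\<integral>\<^sup>+\<eta>. ennreal (a s \<eta>) \<partial>PV) = ennreal (2*(E2 s - Cs s)) \<and> (\<integral>\<eta>. a s \<eta> \<partial>PV) = 2*(E2 s - Cs s)
      \<and> Cs s \<le> E2 s \<and> D s - DU s = E2 s - Cs s \<and> D s \<le> E2 s" by (rule per_s)
  qed
  have Dnn: "0 \<le> D s" for s unfolding D_def by (rule Bochner_Integration.integral_nonneg) auto
  have DUnn: "0 \<le> DU s" for s unfolding DU_def by (rule Bochner_Integration.integral_nonneg) auto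
  have Csnn: "0 \<le> Cs s" for s unfolding Cs_def by (rule Bochner_Integration.integral_nonneg) auto
  have E2nn: "0 \<le> E2 s" for s unfolding E2_def by (rule Bochner_Integration.integral_nonneg) auto
  have ann: "0 \<le> a s \<eta>" for s \<eta> unfolding a_def by (rule Bochner_Integration.integral_nonneg) auto
  have iD: "integrable S D"
    by (rule Bochner_Integration.integrable_bound[OF iE2 mD]) (use AEp in \<open>auto simp: Dnn E2nn elim!: AE_mp intro!: AE_I2\<close>)
  have mT: "(\<lambda>s. D s - DU s) \<in> borel_measurable S" using mD mDU by measurable
  have iT: "integrable S (\<lambda>s. D s - DU s)"
  proof (rule Bochner_Integration.integrable_bound[OF iE2 mT])
    show "AE s in S. norm (D s - DU s) \<le> norm (E2 s)"
      using AEp by eventually_elim (use Csnn E2nn in auto)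
  qed
  have ia: "integrable (S \<Otimes>\<^sub>M PV) (\<lambda>z. a (fst z) (snd z))"
  proof (rule integrableI_nonneg[OF ma])
    show "AE z in S \<Otimes>\<^sub>M PV. 0 \<le> a (fst z) (snd z)" by (simp add: ann)
    have mae: "(\<lambda>z. ennreal (a (fst z) (snd z))) \<in> borel_measurable (S \<Otimes>\<^sub>M PV)" using ma by measurable
    have "(\<integral>\<^sup>+z. ennreal (a (fst z) (snd z)) \<partial>(S \<Otimes>\<^sub>M PV)) = (\<integral>\<^sup>+s. \<integral>\<^sup>+\<eta>. ennreal (a s \<eta>) \<partial>PV \<partial>S)"
      using PV.nn_integral_fst[OF mae[unfolded defsM]] by (simp add: defsM)
    also have "\<dots> \<le> (\<integral>\<^sup>+s. ennreal (2 * E2 s) \<partial>S)"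
      by (rule nn_integral_mono_AE) (use AEp in \<open>eventually_elim, use Csnn in \<open>auto intro!: ennreal_leI\<close>\<close>)
    also have "\<dots> = ennreal (\<integral>s. 2 * E2 s \<partial>S)"
      by (rule nn_integral_eq_integral) (use iE2 E2nn in auto)
    also have "\<dots> < \<infinity>" by simp
    finally show "(\<integral>\<^sup>+z. ennreal (a (fst z) (snd z)) \<partial>(S \<Otimes>\<^sub>M PV)) < \<infinity>" .
  qed
  have Fub: "(\<integral>\<eta>. (\<integral>s. a s \<eta> \<partial>S) \<partial>PV) = (\<integral>s. (\<integral>\<eta>. a s \<eta> \<partial>PV) \<partial>S)"
    using SV.Fubini_integral[of a] ia unfolding defsM by (simp add: split_beta')
  have mia: "(\<lambda>s. \<integral>\<eta>. a s \<eta> \<partial>PV) \<in> borel_measurable S"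
    using PV.borel_measurable_lebesgue_integral[of a S] ma unfolding defsM by (simp add: split_beta')
  have num: "(\<integral>\<eta>. (\<integral>s. a s \<eta> \<partial>S) \<partial>PV) = 2 * (\<integral>s. D s - DU s \<partial>S)"
  proof -
    have "(\<integral>s. (\<integral>\<eta>. a s \<eta> \<partial>PV) \<partial>S) = (\<integral>s. 2 * (D s - DU s) \<partial>S)"
      by (rule integral_cong_AE[OF mia]) (use mT in measurable, use AEp in \<open>eventually_elim, simp\<close>)
    then show ?thesis using Fub by (simp only: integral_mult_right_zero)
  qed
  have T0: "0 \<le> (\<integral>s. D s - DU s \<partial>S)"
    by (rule integral_nonneg_AE) (use AEp in \<open>eventually_elim, use Csnn in auto\<close>)
  have TD: "(\<integral>s. D s - DU s \<partial>S) \<le> (\<integral>s. D s \<partial>S)"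
    by (rule Bochner_Integration.integral_mono[OF iT iD]) (simp add: DUnn)
  have Dden: "(\<integral>s. D s \<partial>S) \<le> (\<integral>s. E2 s \<partial>S)"
    by (rule integral_mono_AE[OF iD iE2]) (use AEp in \<open>eventually_elim, auto\<close>)
  have final: "(\<integral>\<eta>. (\<integral>s. a s \<eta> \<partial>S) / (\<integral>s. E2 s \<partial>S) \<partial>PV) \<le> 2 * ((\<integral>s. D s - DU s \<partial>S) / (\<integral>s. D s \<partial>S))"
  proof (cases "(\<integral>s. D s \<partial>S) = 0")
    case True
    then have "(\<integral>s. D s - DU s \<partial>S) = 0" using T0 TD by linarith
    then show ?thesis using num True by simp
  next
    case False
    have "0 \<le> (\<integral>s. D s \<partial>S)" by (rule Bochner_Integration.integral_nonneg) (simp add: Dnn)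
    then have pos: "0 < (\<integral>s. D s \<partial>S)" using False by linarith
    have "(\<integral>\<eta>. (\<integral>s. a s \<eta> \<partial>S) / (\<integral>s. E2 s \<partial>S) \<partial>PV) = 2 * (\<integral>s. D s - DU s \<partial>S) / (\<integral>s. E2 s \<partial>S)"
      using num by simp
    also have "\<dots> \<le> 2 * (\<integral>s. D s - DU s \<partial>S) / (\<integral>s. D s \<partial>S)"
      by (rule divide_left_mono) (use T0 pos Dden in auto)
    finally show ?thesis by simp
  qed
  show ?thesis
    apply (unfold M_def[symmetric] I_def[symmetric] sobol_tot_def sob_Dtot_def sob_D_def sob_DV_def sob_condE_def
       sob_f0_def rel_mse_def reduced_model_def dd e1 LS)
    apply (unfold PI_def[symmetric] PU_def[symmetric] PV_def[symmetric] S_def[symmetric])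
    apply (unfold f0_def[symmetric] c_def[symmetric])
    apply (unfold D_def[symmetric] DU_def[symmetric] E2_def[symmetric] a_def[symmetric])
    apply (rule final)
    done
qed
end
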